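(* Let $X$ be a Banach space with $n(X)=1$. The following are equivalent: (a) $X$ has the BPBpp-nu; (b) $X$ has the BPBop-nu; (c) $X$ is one-dimensional.
   Context: Let $X$ be a Banach space over $\mathbb{K}\in\{\mathbb{R},\mathbb{C}\}$, $\mathcal{L}(X)$ the bounded linear operators on $X$ with operator norm. $\Pi(X)=\{(x,x^* )\in S_X\times S_{X^*}: x^*(x)=1\}$; $v(T)=\sup\{|x^*(Tx)|:(x,x^* )\in\Pi(X)\}$; the numerical index is $n(X)=\inf\{v(T): T\in\mathcal{L}(X),\ \|T\|=1\}$. $X$ has the BPBpp-nu if for every $\varepsilon>0$ there is $\eta(\varepsilon)>0$ such that whenever $T\in\mathcal{L}(X)$ with $v(T)=1$ and $(x,x^* )\in\Pi(X)$ satisfy $|x^*(Tx)|>1-\eta(\varepsilon)$, there exists $S\in\mathcal{L}(X)$ with $v(S)=1$, $|x^*(Sx)|=1$ and $\|S-T\|<\varepsilon$. $X$ has the BPBop-nu if for every $\varepsilon>0$ there is $\eta(\varepsilon)>0$ such that whenever $T\in\mathcal{L}(X)$ with $v(T)=1$ and $(x,x^* )\in\Pi(X)$ satisfy $|x^*(Tx)|>1-\eta(\varepsilon)$, there is $(y,y^* )\in\Pi(X)$ with $|y^*(Ty)|=1$, $\|y-x\|<\varepsilon$ and $\|y^*-x^*\|<\varepsilon$. *)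

theory Defs
  imports "HOL-Analysis.Analysis"
begin

text \<open>Scalar field 'k (real or complex), scalar multiplication sc on a Banach space 'a.
  For the real case sc = scaleR; for the complex case sc is a complex scalar
  multiplication compatible with the real structure and the norm.\<close>

definition complex_normed_structure :: "(complex \<Rightarrow> 'a::real_normed_vector \<Rightarrow> 'a) \<Rightarrow> bool" where
  "complex_normed_structure scC \<longleftrightarrow>
     (\<forall>r x. scC (complex_of_real r) x = r *\<^sub>R x) \<and>
     (\<forall>a b x. scC (a * b) x = scC a (scC b x)) \<and>
     (\<forall>a b x. scC (a + b) x = scC a x + scC b x) \<and>
     (\<forall>a x y. scC a (x + y) = scC a x + scC a y) \<and>
     (\<forall>a x. norm (scC a x) = cmod a * norm x)"

definition bop :: "('k::real_normed_field \<Rightarrow> 'a::real_normed_vector \<Rightarrow> 'a) \<Rightarrow> ('a \<Rightarrow> 'a) \<Rightarrow> bool" where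
  "bop sc T \<longleftrightarrow> bounded_linear T \<and> (\<forall>c x. T (sc c x) = sc c (T x))"

definition bfun :: "('k::real_normed_field \<Rightarrow> 'a::real_normed_vector \<Rightarrow> 'a) \<Rightarrow> ('a \<Rightarrow> 'k) \<Rightarrow> bool" where
  "bfun sc f \<longleftrightarrow> bounded_linear f \<and> (\<forall>c x. f (sc c x) = c * f x)"

definition states :: "('k::real_normed_field \<Rightarrow> 'a::real_normed_vector \<Rightarrow> 'a) \<Rightarrow> ('a \<times> ('a \<Rightarrow> 'k)) set" where
  "states sc = {(x, f). norm x = 1 \<and> bfun sc f \<and> onorm f = 1 \<and> f x = 1}"

definition numrad :: "('k::real_normed_field \<Rightarrow> 'a::real_normed_vector \<Rightarrow> 'a) \<Rightarrow> ('a \<Rightarrow> 'a) \<Rightarrow> real" where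
  "numrad sc T = (SUP p \<in> states sc. norm (snd p (T (fst p))))"

definition numidx :: "('k::real_normed_field \<Rightarrow> 'a::real_normed_vector \<Rightarrow> 'a) \<Rightarrow> real" where
  "numidx sc = (INF T \<in> {T. bop sc T \<and> onorm T = 1}. numrad sc T)"

definition BPBpp_nu :: "('k::real_normed_field \<Rightarrow> 'a::real_normed_vector \<Rightarrow> 'a) \<Rightarrow> bool" where
  "BPBpp_nu sc \<longleftrightarrow> (\<forall>\<epsilon>>0. \<exists>\<eta>>0. \<forall>T x f.
      bop sc T \<and> numrad sc T = 1 \<and> (x, f) \<in> states sc \<and> norm (f (T x)) > 1 - \<eta> \<longrightarrow>
      (\<exists>S. bop sc S \<and> numrad sc S = 1 \<and> norm (f (S x)) = 1 \<and> onorm (\<lambda>z. S z - T z) < \<epsilon>))"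

definition BPBop_nu :: "('k::real_normed_field \<Rightarrow> 'a::real_normed_vector \<Rightarrow> 'a) \<Rightarrow> bool" where
  "BPBop_nu sc \<longleftrightarrow> (\<forall>\<epsilon>>0. \<exists>\<eta>>0. \<forall>T x f.
      bop sc T \<and> numrad sc T = 1 \<and> (x, f) \<in> states sc \<and> norm (f (T x)) > 1 - \<eta> \<longrightarrow>
      (\<exists>y g. (y, g) \<in> states sc \<and> norm (g (T y)) = 1 \<and> norm (y - x) < \<epsilon> \<and>
             onorm (\<lambda>z. g z - f z) < \<epsilon>))"

definition one_dim :: "('k::real_normed_field \<Rightarrow> 'a::real_normed_vector \<Rightarrow> 'a) \<Rightarrow> bool" where
  "one_dim sc \<longleftrightarrow> (\<exists>e. e \<noteq> 0 \<and> (\<forall>x. \<exists>c. x = sc c e))"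

end

theory Submission
  imports Defs
begin


definition hbg :: "'a::real_normed_vector \<Rightarrow> ('a \<times> real) set \<Rightarrow> bool" where
"hbg x0 G \<longleftrightarrow> (\<forall>x a b. (x,a)\<in>G \<longrightarrow> (x,b)\<in>G \<longrightarrow> a = b) \<and>
   (\<forall>x a y b. (x,a)\<in>G \<longrightarrow> (y,b)\<in>G \<longrightarrow> (x+y,a+b)\<in>G) \<and>
   (\<forall>r x a. (x,a)\<in>G \<longrightarrow> (r *\<^sub>R x, r*a) \<in> G) \<and>
   (\<forall>x a. (x,a)\<in>G \<longrightarrow> a \<le> norm x) \<and> (x0, 1) \<in> G"

lemma hbg_G0:
  assumes "norm x0 = 1"
  shows "hbg x0 {(t *\<^sub>R x0, t) | t. True}"
proof -
  have x0: "x0 \<noteq> 0" using assms by auto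
  show ?thesis unfolding hbg_def
  proof (intro conjI allI impI)
    fix x a b assume "(x,a) \<in> {(t *\<^sub>R x0, t) | t. True}" "(x,b) \<in> {(t *\<^sub>R x0, t) | t. True}"
    then show "a = b" using x0 by (auto simp: scaleR_cancel_right)
  next
    fix x a y b assume "(x,a) \<in> {(t *\<^sub>R x0, t) | t. True}" "(y,b) \<in> {(t *\<^sub>R x0, t) | t. True}"
    then show "(x+y,a+b) \<in> {(t *\<^sub>R x0, t) | t. True}" by (auto simp: scaleR_add_left)
  next
    fix r x a assume "(x,a) \<in> {(t *\<^sub>R x0, t) | t. True}"
    then show "(r *\<^sub>R x, r*a) \<in> {(t *\<^sub>R x0, t) | t. True}" by auto
  next
    fix x a assume "(x,a) \<in> {(t *\<^sub>R x0, t) | t. True}"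
    then show "a \<le> norm x" using assms by auto
  next
    show "(x0, 1) \<in> {(t *\<^sub>R x0, t) | t. True}" by (auto intro: exI[of _ 1])
  qed
qed

lemma hbg_union:
  assumes "C \<noteq> {}" "\<And>G. G \<in> C \<Longrightarrow> hbg x0 G" "chain\<^sub>\<subseteq> C"
  shows "hbg x0 (\<Union>C)"
proof -
  have two: "\<exists>G\<in>C. p \<in> G \<and> q \<in> G" if pq: "p \<in> \<Union>C" "q \<in> \<Union>C" for p q
  proof -
    obtain G1 G2 where "G1 \<in> C" "G2 \<in> C" "p \<in> G1" "q \<in> G2" using pq by (meson UnionE)
    then show ?thesis using assms(3) unfolding chain_subset_def by blast
  qed
  show ?thesis unfolding hbg_def
  proof (intro conjI allI impI)
    fix x a b assume "(x,a) \<in> \<Union>C" "(x,b) \<in> \<Union>C"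
    then show "a = b" using two assms(2) unfolding hbg_def by metis
  next
    fix x a y b assume "(x,a) \<in> \<Union>C" "(y,b) \<in> \<Union>C"
    then obtain G where "G \<in> C" "(x,a)\<in>G" "(y,b)\<in>G" using two by blast
    then show "(x+y,a+b) \<in> \<Union>C" using assms(2) unfolding hbg_def by blast
  next
    fix r x a assume "(x,a) \<in> \<Union>C"
    then obtain G where "G \<in> C" "(x,a)\<in>G" by blast
    then show "(r *\<^sub>R x, r*a) \<in> \<Union>C" using assms(2) unfolding hbg_def by blast
  next
    fix x a assume "(x,a) \<in> \<Union>C"
    then obtain G where "G \<in> C" "(x,a)\<in>G" by blast
    then show "a \<le> norm x" using assms(2) unfolding hbg_def by blast
  next
    obtain G where "G \<in> C" using assms(1) by blast
    then show "(x0, 1) \<in> \<Union>C" using assms(2) unfolding hbg_def by blast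
  qed
qed

lemma hbg_extend:
  assumes M: "hbg x0 M" and z: "\<And>a. (z,a) \<notin> M"
  shows "\<exists>M'. hbg x0 M' \<and> M \<subseteq> M' \<and> M' \<noteq> M"
proof -
  have sv: "\<And>x a b. (x,a)\<in>M \<Longrightarrow> (x,b)\<in>M \<Longrightarrow> a = b"
   and ad: "\<And>x a y b. (x,a)\<in>M \<Longrightarrow> (y,b)\<in>M \<Longrightarrow> (x+y,a+b)\<in>M"
   and sc: "\<And>r x a. (x,a)\<in>M \<Longrightarrow> (r *\<^sub>R x, r*a) \<in> M"
   and bd: "\<And>x a. (x,a)\<in>M \<Longrightarrow> a \<le> norm x"
   and x0: "(x0,1) \<in> M" using M unfolding hbg_def by blast+
  have zero: "(0,0) \<in> M" using sc[OF x0, of 0] by simp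
  define L where "L = {a - norm (s - z) | s a. (s,a) \<in> M}"
  have key: "a1 - norm (s1 - z) \<le> norm (s2 + z) - a2" if "(s1,a1)\<in>M" "(s2,a2)\<in>M" for s1 a1 s2 a2
  proof -
    have "a1 + a2 \<le> norm (s1 + s2)" using bd[OF ad[OF that]] .
    also have "\<dots> \<le> norm (s1 - z) + norm (s2 + z)"
      using norm_triangle_ineq[of "s1 - z" "s2 + z"] by simp
    finally show ?thesis by simp
  qed
  define c where "c = Sup L"
  have Lne: "L \<noteq> {}" using zero unfolding L_def by blast
  have Lbdd: "bdd_above L" unfolding L_def bdd_above_def using key[OF _ zero] by fastforce
  have c_ge: "a - norm (s - z) \<le> c" if "(s,a)\<in>M" for s a
    unfolding c_def by (rule cSup_upper[OF _ Lbdd]) (use that in \<open>auto simp: L_def\<close>)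
  have c_le: "c \<le> norm (s + z) - a" if "(s,a)\<in>M" for s a
    unfolding c_def by (rule cSup_least[OF Lne]) (use that key in \<open>auto simp: L_def\<close>)
  define M' where "M' = {(s + t *\<^sub>R z, a + t * c) | s a t. (s,a) \<in> M}"
  have "M \<subseteq> M'" unfolding M'_def by force
  moreover have "(z, c) \<in> M'" unfolding M'_def using zero by force
  then have "M' \<noteq> M" using z by blast
  moreover have "hbg x0 M'" unfolding hbg_def
  proof (intro conjI allI impI)
    fix x a b assume "(x,a)\<in>M'" "(x,b)\<in>M'"
    then obtain s1 a1 t1 s2 a2 t2 where e: "x = s1 + t1 *\<^sub>R z" "a = a1 + t1 * c" "(s1,a1)\<in>M"
       "x = s2 + t2 *\<^sub>R z" "b = a2 + t2 * c" "(s2,a2)\<in>M" unfolding M'_def by blast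
    have t: "t1 = t2"
    proof (rule ccontr)
      assume ne: "t1 \<noteq> t2"
      have "(s1 + (-1) *\<^sub>R s2, a1 + (-1) * a2) \<in> M" using ad[OF e(3) sc[OF e(6)]] .
      then have "(s1 - s2, a1 - a2) \<in> M" by simp
      from sc[OF this, of "1/(t2-t1)"]
      have "((1/(t2-t1)) *\<^sub>R (s1 - s2), (1/(t2-t1)) * (a1 - a2)) \<in> M" .
      moreover have "(1/(t2-t1)) *\<^sub>R (s1 - s2) = z"
      proof -
        have "s1 - s2 = (t2 - t1) *\<^sub>R z" using e(1) e(4) by (simp add: algebra_simps)
        then show ?thesis using ne by simp
      qed
      ultimately show False using z by metis
    qed
    then have "s1 = s2" using e by simp
    then have "a1 = a2" using sv e by blast
    then show "a = b" using e t by simp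
  next
    fix x a y b assume "(x,a)\<in>M'" "(y,b)\<in>M'"
    then obtain s1 a1 t1 s2 a2 t2 where e: "x = s1 + t1 *\<^sub>R z" "a = a1 + t1 * c" "(s1,a1)\<in>M"
       "y = s2 + t2 *\<^sub>R z" "b = a2 + t2 * c" "(s2,a2)\<in>M" unfolding M'_def by blast
    have "x + y = (s1 + s2) + (t1 + t2) *\<^sub>R z" "a + b = (a1 + a2) + (t1 + t2) * c"
      using e by (simp_all add: algebra_simps)
    then show "(x+y,a+b)\<in>M'" unfolding M'_def using ad[OF e(3) e(6)] by blast
  next
    fix r x a assume "(x,a)\<in>M'"
    then obtain s1 a1 t1 where e: "x = s1 + t1 *\<^sub>R z" "a = a1 + t1 * c" "(s1,a1)\<in>M"
      unfolding M'_def by blast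
    have "r *\<^sub>R x = r *\<^sub>R s1 + (r * t1) *\<^sub>R z" "r * a = r * a1 + (r * t1) * c"
      using e by (simp_all add: algebra_simps)
    then show "(r *\<^sub>R x, r*a)\<in>M'" unfolding M'_def using sc[OF e(3)] by blast
  next
    fix x a assume "(x,a)\<in>M'"
    then obtain s a1 t where e: "x = s + t *\<^sub>R z" "a = a1 + t * c" "(s,a1)\<in>M"
      unfolding M'_def by blast
    consider "t = 0" | "t > 0" | "t < 0" by linarith
    then show "a \<le> norm x"
    proof cases
      case 1 then show ?thesis using e bd by simp
    next
      case 2
      have "c \<le> norm ((1/t) *\<^sub>R s + z) - (1/t) * a1" using c_le[OF sc[OF e(3)]] .
      also have "(1/t) *\<^sub>R s + z = (1/t) *\<^sub>R x" using 2 e(1) by (simp add: algebra_simps)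
      finally have "c \<le> (1/t) * norm x - (1/t) * a1" using 2 by simp
      then have "t * c \<le> t * ((1/t) * norm x - (1/t) * a1)" using 2 by (simp add: mult_left_mono)
      then show ?thesis using 2 e by (simp add: algebra_simps)
    next
      case 3
      define u where "u = - t"
      have u: "u > 0" using 3 u_def by simp
      have "(1/u) * a1 - norm ((1/u) *\<^sub>R s - z) \<le> c" using c_ge[OF sc[OF e(3)]] .
      also have "(1/u) *\<^sub>R s - z = (1/u) *\<^sub>R x" using u e(1) u_def by (simp add: algebra_simps)
      finally have "(1/u) * a1 - (1/u) * norm x \<le> c" using u by simp
      then have "u * ((1/u) * a1 - (1/u) * norm x) \<le> u * c" using u by (simp add: mult_left_mono)
      then show ?thesis using u e u_def by (simp add: algebra_simps)
    qed
  next
    show "(x0, 1) \<in> M'" unfolding M'_def using x0 by force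
  qed
  ultimately show ?thesis by blast
qed

lemma real_hb:
  fixes x0 :: "'a::real_normed_vector"
  assumes "norm x0 = 1"
  shows "\<exists>f::'a \<Rightarrow> real. (\<forall>x y. f (x+y) = f x + f y) \<and> (\<forall>r x. f (r *\<^sub>R x) = r * f x)
           \<and> f x0 = 1 \<and> (\<forall>x. f x \<le> norm x)"
proof -
  define A where "A = {G. hbg x0 G}"
  have "\<forall>C\<in>chains A. \<exists>U\<in>A. \<forall>X\<in>C. X \<subseteq> U"
  proof
    fix C assume C: "C \<in> chains A"
    show "\<exists>U\<in>A. \<forall>X\<in>C. X \<subseteq> U"
    proof (cases "C = {}")
      case True then show ?thesis using hbg_G0[OF assms] unfolding A_def by blast
    next
      case False
      have "hbg x0 (\<Union>C)" using hbg_union[OF False] C unfolding chains_def A_def by blast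
      then show ?thesis unfolding A_def by blast
    qed
  qed
  from Zorn_Lemma2[OF this] obtain M where M: "M \<in> A" and max: "\<forall>X\<in>A. M \<subseteq> X \<longrightarrow> X = M" by blast
  have hM: "hbg x0 M" using M A_def by simp
  have tot: "\<exists>a. (z,a) \<in> M" for z
  proof (rule ccontr)
    assume "\<nexists>a. (z, a) \<in> M"
    then obtain M' where "hbg x0 M'" "M \<subseteq> M'" "M' \<noteq> M" using hbg_extend[OF hM] by blast
    then show False using max A_def by blast
  qed
  have sv: "\<And>x a b. (x,a)\<in>M \<Longrightarrow> (x,b)\<in>M \<Longrightarrow> a = b"
   and ad: "\<And>x a y b. (x,a)\<in>M \<Longrightarrow> (y,b)\<in>M \<Longrightarrow> (x+y,a+b)\<in>M"
   and sc: "\<And>r x a. (x,a)\<in>M \<Longrightarrow> (r *\<^sub>R x, r*a) \<in> M"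
   and bd: "\<And>x a. (x,a)\<in>M \<Longrightarrow> a \<le> norm x"
   and x0: "(x0,1) \<in> M" using hM unfolding hbg_def by blast+
  define f where "f x = (THE a. (x,a) \<in> M)" for x
  have fM: "(x, f x) \<in> M" for x
    unfolding f_def using tot[of x] sv by (metis theI)
  have fe: "f x = a" if "(x,a) \<in> M" for x a using sv[OF that fM] by simp
  show ?thesis
  proof (intro exI[of _ f] conjI allI)
    fix x y show "f (x+y) = f x + f y" using fe[OF ad[OF fM fM]] .
  next
    fix r x show "f (r *\<^sub>R x) = r * f x" using fe[OF sc[OF fM]] .
  next
    show "f x0 = 1" using fe[OF x0] .
  next
    fix x show "f x \<le> norm x" using bd[OF fM] .
  qed
qed



locale gsc =
  fixes sc :: "'k::real_normed_field \<Rightarrow> 'a::real_normed_vector \<Rightarrow> 'a"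
  assumes sc_of_real: "\<And>r x. sc (of_real r) x = r *\<^sub>R x"
    and sc_mult: "\<And>a b x. sc (a*b) x = sc a (sc b x)"
    and sc_addl: "\<And>a b x. sc (a+b) x = sc a x + sc b x"
    and sc_addr: "\<And>a x y. sc a (x+y) = sc a x + sc a y"
    and sc_norm: "\<And>a x. norm (sc a x) = norm a * norm x"
    and hb: "\<And>x. norm x = 1 \<Longrightarrow> \<exists>f. (x,f) \<in> states sc"
begin

lemma sc_one[simp]: "sc 1 x = x"
  using sc_of_real[of 1 x] by simp

lemma sc_zero_r[simp]: "sc a 0 = 0"
  using sc_norm[of a 0] by simp

lemma sc_scaleR: "sc a (r *\<^sub>R x) = r *\<^sub>R sc a x"
  by (metis mult.commute sc_mult sc_of_real)

lemma sc_minus: "sc a (- x) = - sc a x"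
  using sc_scaleR[of a "-1" x] by simp

lemma sc_diff: "sc a (x - y) = sc a x - sc a y"
  by (metis diff_conv_add_uminus sc_addr sc_minus)

lemma bfun_bl: "bfun sc f \<Longrightarrow> bounded_linear f" unfolding bfun_def by blast
lemma bfun_sc: "bfun sc f \<Longrightarrow> f (sc c x) = c * f x" unfolding bfun_def by blast
lemma bop_bl: "bop sc T \<Longrightarrow> bounded_linear T" unfolding bop_def by blast
lemma bop_sc: "bop sc T \<Longrightarrow> T (sc c x) = sc c (T x)" unfolding bop_def by blast

lemma stD:
  assumes "(x,f) \<in> states sc"
  shows "norm x = 1" "bfun sc f" "onorm f = 1" "f x = 1" "\<And>v. norm (f v) \<le> norm v"
  using assms unfolding states_def apply auto
  by (metis bfun_bl mult_1 onorm)

lemma st_intro: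
  assumes "norm x = 1" "bfun sc f" "f x = 1" "\<And>v. norm (f v) \<le> norm v"
  shows "(x,f) \<in> states sc"
proof -
  have "onorm f \<le> 1" using assms(4) by (intro onorm_bound) auto
  moreover have "norm (f x) / norm x \<le> onorm f" using le_onorm[OF bfun_bl[OF assms(2)]] .
  ultimately have "onorm f = 1" using assms by simp
  then show ?thesis using assms unfolding states_def by auto
qed

lemma bfun_scale: "bfun sc f \<Longrightarrow> bfun sc (\<lambda>x. a * f x)"
  unfolding bfun_def
  by (auto intro: bounded_linear_compose[OF bounded_linear_mult_right] simp: ac_simps)

lemma bfun_add: "bfun sc f \<Longrightarrow> bfun sc g \<Longrightarrow> bfun sc (\<lambda>x. f x + g x)"
  unfolding bfun_def by (auto intro: bounded_linear_add simp: distrib_left)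

lemma bfun_comp: "bfun sc h \<Longrightarrow> bop sc S \<Longrightarrow> bfun sc (\<lambda>x. h (S x))"
  unfolding bfun_def bop_def by (auto intro: bounded_linear_compose)

lemma bop_R:
  assumes "bfun sc \<phi>"
  shows "bop sc (\<lambda>x. sc (\<phi> x) u)"
proof -
  interpret p: bounded_linear \<phi> using bfun_bl[OF assms] .
  obtain K where K: "\<And>x. norm (\<phi> x) \<le> norm x * K" using p.bounded by blast
  have "bounded_linear (\<lambda>x. sc (\<phi> x) u)"
  proof (rule bounded_linear_intro)
    fix x y show "sc (\<phi> (x + y)) u = sc (\<phi> x) u + sc (\<phi> y) u" by (simp add: p.add sc_addl)
  next
    fix r x show "sc (\<phi> (r *\<^sub>R x)) u = r *\<^sub>R sc (\<phi> x) u"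
      by (simp add: p.scale scaleR_conv_of_real sc_mult sc_of_real)
  next
    fix x show "norm (sc (\<phi> x) u) \<le> norm x * (K * norm u)"
      using mult_right_mono[OF K[of x] norm_ge_zero[of u]] by (simp add: sc_norm ac_simps)
  qed
  then show ?thesis unfolding bop_def using bfun_sc[OF assms] by (simp add: sc_mult)
qed

lemma onorm_R:
  assumes "bfun sc \<phi>" "norm u = 1"
  shows "onorm (\<lambda>x. sc (\<phi> x) u) = onorm \<phi>"
proof (rule antisym)
  show "onorm (\<lambda>x. sc (\<phi> x) u) \<le> onorm \<phi>"
    using assms by (intro onorm_bound onorm_pos_le bfun_bl) (auto simp: sc_norm intro: onorm bfun_bl)
  show "onorm \<phi> \<le> onorm (\<lambda>x. sc (\<phi> x) u)"
  proof (rule onorm_bound)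
    show "0 \<le> onorm (\<lambda>x. sc (\<phi> x) u)" using bop_bl[OF bop_R[OF assms(1), of u]] by (rule onorm_pos_le)
    fix x show "norm (\<phi> x) \<le> onorm (\<lambda>x. sc (\<phi> x) u) * norm x"
      using onorm[OF bop_bl[OF bop_R[OF assms(1), of u]], of x] assms(2) by (simp add: sc_norm)
  qed
qed

lemma st_ne: "\<exists>x::'a. x \<noteq> 0 \<Longrightarrow> states sc \<noteq> {}"
proof -
  assume "\<exists>x::'a. x \<noteq> 0"
  then obtain x :: 'a where "x \<noteq> 0" by blast
  then have "norm ((1/norm x) *\<^sub>R x) = 1" by simp
  then show ?thesis using hb by blast
qed

lemma nr_bdd: "bounded_linear T \<Longrightarrow> (x,f) \<in> states sc \<Longrightarrow> norm (f (T x)) \<le> onorm T"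
  using stD(5)[of x f "T x"] onorm[of T x] stD(1)[of x f] by auto

lemma nr_upper:
  assumes "bounded_linear T" "(x,f) \<in> states sc"
  shows "norm (f (T x)) \<le> numrad sc T"
proof -
  have "bdd_above ((\<lambda>p. norm (snd p (T (fst p)))) ` states sc)"
    using nr_bdd[OF assms(1)] by (auto intro!: bdd_aboveI[of _ "onorm T"])
  from cSUP_upper[OF assms(2) this] show ?thesis unfolding numrad_def by simp
qed

lemma nr_le_onorm:
  assumes "bounded_linear T" "states sc \<noteq> {}"
  shows "numrad sc T \<le> onorm T"
  unfolding numrad_def using nr_bdd[OF assms(1)] assms(2) by (auto intro!: cSUP_least)

lemma nr_approx:
  assumes "bounded_linear T" "states sc \<noteq> {}" "a < numrad sc T"
  shows "\<exists>x f. (x,f) \<in> states sc \<and> a < norm (f (T x))"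
proof (rule ccontr)
  assume "\<not> ?thesis"
  then have "numrad sc T \<le> a" unfolding numrad_def using assms(2)
    by (intro cSUP_least) (auto simp: not_less)
  then show False using assms(3) by simp
qed

lemma nr_nonneg: "bounded_linear T \<Longrightarrow> states sc \<noteq> {} \<Longrightarrow> 0 \<le> numrad sc T"
  using nr_upper by (metis all_not_in_conv norm_ge_zero order_trans surj_pair)

lemma nr_eq:
  assumes ne: "\<exists>x::'a. x \<noteq> 0" and ni: "numidx sc = 1" and T: "bop sc T"
  shows "numrad sc T = onorm T"
proof -
  have st: "states sc \<noteq> {}" using st_ne[OF ne] .
  have blT: "bounded_linear T" using bop_bl[OF T] .
  have "onorm T \<le> numrad sc T"
  proof (cases "onorm T = 0")
    case True then show ?thesis using nr_nonneg[OF blT st] by simp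
  next
    case False
    define o' where "o' = onorm T"
    have o: "o' > 0" using False onorm_pos_le[OF blT] o'_def by simp
    define T' where "T' = (\<lambda>x. (1/o') *\<^sub>R T x)"
    have blT': "bounded_linear T'" unfolding T'_def
      by (rule bounded_linear_compose[OF bounded_linear_scaleR_right blT])
    have "bop sc T'" unfolding bop_def T'_def using blT' bop_sc[OF T] sc_scaleR
      by (simp add: T'_def)
    moreover have "onorm T' = 1" unfolding T'_def using onorm_scaleR[OF blT, of "1/o'"] o o'_def by simp
    ultimately have inA: "T' \<in> {T. bop sc T \<and> onorm T = 1}" by simp
    have "bdd_below (numrad sc ` {T. bop sc T \<and> onorm T = 1})"
      using nr_nonneg[OF _ st] by (auto intro!: bdd_belowI[of _ 0] dest: bop_bl)
    from cINF_lower[OF this inA] ni have 1: "1 \<le> numrad sc T'" unfolding numidx_def by simp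
    have "numrad sc T' \<le> numrad sc T / o'"
      unfolding numrad_def[of sc T'] using st
    proof (intro cSUP_least)
      fix p assume "p \<in> states sc"
      then obtain x f where p: "p = (x,f)" "(x,f) \<in> states sc" by (cases p) auto
      have "f (T' x) = (1/o') *\<^sub>R f (T x)"
        unfolding T'_def using linear.scaleR[OF bounded_linear.linear[OF bfun_bl[OF stD(2)[OF p(2)]]]] by simp
      then have "norm (f (T' x)) = norm (f (T x)) / o'" using o by simp
      also have "\<dots> \<le> numrad sc T / o'" using nr_upper[OF blT p(2)] o by (simp add: divide_right_mono)
      finally show "norm (snd p (T' (fst p))) \<le> numrad sc T / o'" using p by simp
    qed auto
    with 1 have "1 \<le> numrad sc T / o'" by simp
    then show ?thesis using o o'_def by (simp add: field_simps)
  qed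
  then show ?thesis using nr_le_onorm[OF blT st] by simp
qed

lemma mix:
  fixes a b :: 'k
  assumes "0 < l" "l < 1" "norm a \<le> 1" "norm b \<le> 1" "1 \<le> norm (of_real l * a + of_real (1-l) * b)"
  shows "1 \<le> norm a"
proof -
  have e1: "norm (of_real l * a) = l * norm a" using assms(1) by (simp add: norm_mult)
  have e2: "norm (of_real (1-l) * b) = (1-l) * norm b"
    by (simp only: norm_mult norm_of_real) (use assms(2) in simp)
  have "norm (of_real l * a + of_real (1-l) * b) \<le> l * norm a + (1-l) * norm b"
    using norm_triangle_ineq[of "of_real l * a" "of_real (1-l) * b"] unfolding e1 e2 .
  also have "\<dots> \<le> l * norm a + (1-l)" using assms(2,4) by (simp add: mult_left_le)
  finally have "1 \<le> l * norm a + (1 - l)" using assms(5) by linarith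
  then have "l * 1 \<le> l * norm a" by simp
  then show ?thesis using assms(1) by simp
qed

lemma config:
  assumes ne: "\<exists>x::'a. x \<noteq> 0" and nd: "\<not> one_dim sc"
  shows "\<exists>f0 y. bfun sc f0 \<and> onorm f0 = 1 \<and> (\<forall>v. norm (f0 v) \<le> norm v) \<and> norm y = 1 \<and> f0 y = 0"
proof -
  obtain x :: 'a where x: "x \<noteq> 0" using ne by blast
  define x0 where "x0 = (1/norm x) *\<^sub>R x"
  have nx0: "norm x0 = 1" using x x0_def by simp
  then obtain f0 where st0: "(x0,f0) \<in> states sc" using hb by blast
  have "x0 \<noteq> 0" using nx0 by auto
  then obtain w where w: "\<And>c. w \<noteq> sc c x0" using nd unfolding one_dim_def by blast
  define y' where "y' = w - sc (f0 w) x0"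
  have y'0: "y' \<noteq> 0" using w[of "f0 w"] y'_def by auto
  have bl: "bounded_linear f0" using bfun_bl[OF stD(2)[OF st0]] .
  have fy': "f0 y' = 0" unfolding y'_def
    using bl[THEN bounded_linear.linear, THEN linear_diff] bfun_sc[OF stD(2)[OF st0]] stD(4)[OF st0] by simp
  define y where "y = (1/norm y') *\<^sub>R y'"
  have "norm y = 1" using y'0 y_def by simp
  moreover have "f0 y = 0" unfolding y_def using linear.scaleR[OF bounded_linear.linear[OF bl]] fy' by simp
  ultimately show ?thesis using stD[OF st0] by blast
qed

lemma config2:
  assumes ne: "\<exists>x::'a. x \<noteq> 0" and ni: "numidx sc = 1"
    and f0: "bfun sc f0" "onorm f0 = 1" "\<forall>v. norm (f0 v) \<le> norm v" and y: "norm y = 1"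
    and d: "0 < d" "d \<le> 1"
  shows "\<exists>z h. (z,h) \<in> states sc \<and> 1 - d < norm (f0 z) \<and> 1 - d < norm (h y)
     \<and> 1 - d < norm (f0 z) * norm (h y)"
proof -
  let ?T = "\<lambda>x. sc (f0 x) y"
  have "numrad sc ?T = 1" using nr_eq[OF ne ni bop_R[OF f0(1)]] onorm_R[OF f0(1) y] f0(2) by simp
  then have 1: "1 - d < numrad sc ?T" using d by simp
  then obtain z h where zh: "(z,h) \<in> states sc" "1 - d < norm (h (?T z))"
    using nr_approx[OF bop_bl[OF bop_R[OF f0(1)]] st_ne[OF ne]] by blast
  have hT: "h (?T z) = f0 z * h y" using bfun_sc[OF stD(2)[OF zh(1)]] by simp
  have a: "norm (f0 z) \<le> 1" using f0(3) stD(1)[OF zh(1)] by metis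
  have b: "norm (h y) \<le> 1" using stD(5)[OF zh(1)] y by metis
  have p: "1 - d < norm (f0 z) * norm (h y)" using zh(2) hT by (simp add: norm_mult)
  have "norm (f0 z) * norm (h y) \<le> norm (f0 z)" using b by (simp add: mult_left_le)
  moreover have "norm (f0 z) * norm (h y) \<le> norm (h y)" using a by (simp add: mult_left_le_one_le)
  ultimately have "1 - d < norm (f0 z)" "1 - d < norm (h y)" using p by linarith+
  then show ?thesis using zh p by blast
qed

lemma bfun_diff: "bfun sc f \<Longrightarrow> f x - f y = f (x - y)"
  using bfun_bl[THEN bounded_linear.linear, THEN linear_diff] by metis

lemma prod_one:
  fixes a b :: real
  assumes "0 \<le> a" "a \<le> 1" "0 \<le> b" "b \<le> 1" "a * b = 1"
  shows "a = 1" "b = 1"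
proof -
  have "a * b \<le> a" using mult_left_le[OF assms(4) assms(1)] .
  moreover have "a * b \<le> b" using mult_left_le_one_le[OF assms(3) assms(1) assms(2)] .
  ultimately show "a = 1" "b = 1" using assms by linarith+
qed

lemma op_one:
  assumes ne: "\<exists>x::'a. x \<noteq> 0" and ni: "numidx sc = 1" and bp: "BPBop_nu sc"
  shows "one_dim sc"
proof (rule ccontr)
  assume nd: "\<not> one_dim sc"
  obtain \<eta> where \<eta>: "\<eta> > 0" and H: "\<And>T x f. bop sc T \<Longrightarrow> numrad sc T = 1 \<Longrightarrow> (x, f) \<in> states sc
      \<Longrightarrow> norm (f (T x)) > 1 - \<eta> \<Longrightarrow>
      (\<exists>y g. (y, g) \<in> states sc \<and> norm (g (T y)) = 1 \<and> norm (y - x) < 1/2 \<and>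
             onorm (\<lambda>z. g z - f z) < 1/2)"
    using bp[unfolded BPBop_nu_def, THEN spec, of "1/2"] by auto
  define e where "e = min \<eta> (1/2)"
  have e: "0 < e" "e \<le> 1/2" "e \<le> \<eta>" using \<eta> e_def by auto
  obtain f0 y where f0: "bfun sc f0" "onorm f0 = 1" "\<forall>v. norm (f0 v) \<le> norm v" and y: "norm y = 1" "f0 y = 0"
    using config[OF ne nd] by blast
  obtain z h where zh: "(z,h) \<in> states sc" "1 - e < norm (f0 z) * norm (h y)"
    using config2[OF ne ni f0 y(1), of e] e by auto
  let ?T = "\<lambda>x. sc (f0 x) y"
  have bT: "bop sc ?T" using bop_R[OF f0(1)] .
  have nT: "numrad sc ?T = 1" using nr_eq[OF ne ni bT] onorm_R[OF f0(1) y(1)] f0(2) by simp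
  have "h (?T z) = f0 z * h y" using bfun_sc[OF stD(2)[OF zh(1)]] by simp
  then have "norm (h (?T z)) > 1 - \<eta>" using zh(2) e by (simp add: norm_mult)
  then obtain w g where wg: "(w,g) \<in> states sc" "norm (g (?T w)) = 1" using H[OF bT nT zh(1)] by blast
  have "g (?T w) = f0 w * g y" using bfun_sc[OF stD(2)[OF wg(1)]] by simp
  then have p: "norm (f0 w) * norm (g y) = 1" using wg(2) by (simp add: norm_mult)
  have "norm (f0 w) \<le> 1" using f0(3) stD(1)[OF wg(1)] by metis
  moreover have "norm (g y) \<le> 1" using stD(5)[OF wg(1)] y(1) by metis
  ultimately have n1: "norm (f0 w) = 1" "norm (g y) = 1" using prod_one[OF _ _ _ _ p] by auto
  define c where "c = g y"
  have c0: "c \<noteq> 0" using n1 c_def by auto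
  define y1 where "y1 = sc (inverse c) y"
  have ny1: "norm y1 = 1" unfolding y1_def using sc_norm n1 c_def y by (simp add: norm_inverse)
  have gy1: "g y1 = 1" unfolding y1_def using bfun_sc[OF stD(2)[OF wg(1)]] c0 c_def by simp
  have f0y1: "f0 y1 = 0" unfolding y1_def using bfun_sc[OF f0(1)] y(2) by simp
  have sty1: "(y1, g) \<in> states sc" using st_intro[OF ny1 stD(2)[OF wg(1)] gy1 stD(5)[OF wg(1)]] .
  define b where "b = f0 w"
  have b0: "b \<noteq> 0" "norm b = 1" using n1 b_def by auto
  define f1 where "f1 = (\<lambda>x. inverse b * f0 x)"
  have bf1: "bfun sc f1" unfolding f1_def using bfun_scale[OF f0(1)] .
  have f1w: "f1 w = 1" unfolding f1_def b_def using b0 b_def by simp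
  have f1n: "norm (f1 v) \<le> norm v" for v unfolding f1_def using b0 f0(3) by (simp add: norm_mult norm_inverse)
  have f1y1: "f1 y1 = 0" unfolding f1_def using f0y1 by simp
  define l where "l = e / 2"
  have l: "0 < l" "l < 1" using e l_def by auto
  define \<phi> where "\<phi> = (\<lambda>x. of_real l * f1 x + of_real (1-l) * g x)"
  have bphi: "bfun sc \<phi>" unfolding \<phi>_def using bfun_add[OF bfun_scale[OF bf1] bfun_scale[OF stD(2)[OF wg(1)]]] .
  have phiw: "\<phi> w = 1" unfolding \<phi>_def using f1w stD(4)[OF wg(1)] by (simp flip: of_real_add)
  have phin: "norm (\<phi> v) \<le> norm v" for v
  proof -
    have "norm (\<phi> v) \<le> norm (of_real l * f1 v) + norm (of_real (1-l) * g v)"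
      unfolding \<phi>_def by (rule norm_triangle_ineq)
    also have "\<dots> = l * norm (f1 v) + (1-l) * norm (g v)"
      by (simp only: norm_mult norm_of_real) (use l in simp)
    also have "\<dots> \<le> l * norm v + (1-l) * norm v"
      using l f1n[of v] stD(5)[OF wg(1), of v] by (intro add_mono mult_left_mono) auto
    finally show ?thesis by (simp add: algebra_simps)
  qed
  have stphi: "(w, \<phi>) \<in> states sc" using st_intro[OF stD(1)[OF wg(1)] bphi phiw phin] .
  have onphi: "onorm \<phi> = 1" using stD(3)[OF stphi] .
  let ?T2 = "\<lambda>x. sc (\<phi> x) y1"
  have bT2: "bop sc ?T2" using bop_R[OF bphi] .
  have nT2: "numrad sc ?T2 = 1" using nr_eq[OF ne ni bT2] onorm_R[OF bphi ny1] onphi by simp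
  have "g (?T2 y1) = \<phi> y1 * g y1" using bfun_sc[OF stD(2)[OF wg(1)]] by simp
  also have "\<dots> = of_real (1 - l)" unfolding \<phi>_def using gy1 f1y1 by simp
  finally have "norm (g (?T2 y1)) = 1 - l" by (simp only: norm_of_real) (use l in simp)
  then have "norm (g (?T2 y1)) > 1 - \<eta>" using l e l_def by simp
  then obtain x' g' where xg: "(x',g') \<in> states sc" "norm (g' (?T2 x')) = 1" "norm (x' - y1) < 1/2"
    using H[OF bT2 nT2 sty1] by blast
  have "g' (?T2 x') = \<phi> x' * g' y1" using bfun_sc[OF stD(2)[OF xg(1)]] by simp
  then have "1 = norm (\<phi> x') * norm (g' y1)" using xg(2) by (simp add: norm_mult)
  also have "\<dots> \<le> norm (\<phi> x')" using stD(5)[OF xg(1), of y1] ny1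
    by (simp add: mult_left_le)
  finally have "1 \<le> norm (of_real l * f1 x' + of_real (1-l) * g x')" unfolding \<phi>_def .
  from mix[OF l _ _ this] have "1 \<le> norm (f1 x')"
    using f1n[of x'] stD(5)[OF wg(1), of x'] stD(1)[OF xg(1)] by simp
  moreover have "f1 x' = f1 (x' - y1)" using bfun_diff[OF bf1, of x' y1] f1y1 by simp
  ultimately have "1 \<le> norm (x' - y1)" using f1n[of "x' - y1"] by simp
  then show False using xg(3) by simp
qed

lemma onorm_diff_bound:
  assumes "bop sc S" "bop sc T"
  shows "norm (S v - T v) \<le> onorm (\<lambda>z. S z - T z) * norm v"
  using onorm[OF bounded_linear_sub[OF bop_bl[OF assms(1)] bop_bl[OF assms(2)]]] by simp

lemma pp_one:
  assumes ne: "\<exists>x::'a. x \<noteq> 0" and ni: "numidx sc = 1" and bp: "BPBpp_nu sc"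
  shows "one_dim sc"
proof (rule ccontr)
  assume nd: "\<not> one_dim sc"
  obtain \<eta> where \<eta>: "\<eta> > 0" and H: "\<And>T x f. bop sc T \<Longrightarrow> numrad sc T = 1 \<Longrightarrow> (x, f) \<in> states sc
      \<Longrightarrow> norm (f (T x)) > 1 - \<eta> \<Longrightarrow>
      (\<exists>S. bop sc S \<and> numrad sc S = 1 \<and> norm (f (S x)) = 1 \<and> onorm (\<lambda>z. S z - T z) < 1/4)"
    using bp[unfolded BPBpp_nu_def, THEN spec, of "1/4"] by auto
  define e where "e = min \<eta> (1/2)"
  have e: "0 < e" "e \<le> 1/2" "e \<le> \<eta>" using \<eta> e_def by auto
  obtain f0 y where f0: "bfun sc f0" "onorm f0 = 1" "\<forall>v. norm (f0 v) \<le> norm v" and y: "norm y = 1" "f0 y = 0"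
    using config[OF ne nd] by blast
  define d where "d = e / 4"
  have d: "0 < d" "d \<le> 1" using e d_def by auto
  obtain z h where zh: "(z,h) \<in> states sc" "1 - d < norm (f0 z)" "1 - d < norm (h y)"
    using config2[OF ne ni f0 y(1) d] by auto
  have hst: "bfun sc h" "h z = 1" "\<And>v. norm (h v) \<le> norm v" "norm z = 1" using stD[OF zh(1)] by auto
  let ?T = "\<lambda>x. sc (f0 x) z"
  have bT: "bop sc ?T" using bop_R[OF f0(1)] .
  have nT: "numrad sc ?T = 1" using nr_eq[OF ne ni bT] onorm_R[OF f0(1) hst(4)] f0(2) by simp
  have "h (?T z) = f0 z" using bfun_sc[OF hst(1)] hst(2) by simp
  then have "norm (h (?T z)) > 1 - \<eta>" using zh(2) e d_def by simp
  then obtain S where S: "bop sc S" "numrad sc S = 1" "norm (h (S z)) = 1" "onorm (\<lambda>x. S x - ?T x) < 1/4"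
    using H[OF bT nT zh(1)] by blast
  have oS: "onorm S = 1" using nr_eq[OF ne ni S(1)] S(2) by simp
  have Sn: "norm (S v) \<le> norm v" for v using onorm[OF bop_bl[OF S(1)], of v] oS by simp
  define c where "c = h (S z)"
  have c0: "c \<noteq> 0" "norm c = 1" using S(3) c_def by auto
  define \<phi> where "\<phi> = (\<lambda>x. inverse c * h (S x))"
  have bphi: "bfun sc \<phi>" unfolding \<phi>_def using bfun_scale[OF bfun_comp[OF hst(1) S(1)]] .
  have phin: "norm (\<phi> v) \<le> norm v" for v
    unfolding \<phi>_def using c0 hst(3)[of "S v"] Sn[of v] by (simp add: norm_mult norm_inverse)
  have phiz: "\<phi> z = 1" unfolding \<phi>_def c_def using c0 c_def by simp
  have phiy: "norm (\<phi> y) < 1/4"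
  proof -
    have "?T y = 0" using y(2) by (simp add: sc_of_real[of 0, simplified])
    then have "norm (S y) = norm (S y - ?T y)" by simp
    also have "\<dots> \<le> onorm (\<lambda>x. S x - ?T x) * norm y" using onorm_diff_bound[OF S(1) bT] .
    finally have "norm (S y) < 1/4" using S(4) y(1) by simp
    then show ?thesis unfolding \<phi>_def using c0 hst(3)[of "S y"] by (simp add: norm_mult norm_inverse)
  qed
  define l where "l = e / 4"
  have l: "0 < l" "l < 1" using e l_def by auto
  define f where "f = (\<lambda>x. of_real l * \<phi> x + of_real (1-l) * h x)"
  have bf: "bfun sc f" unfolding f_def using bfun_add[OF bfun_scale[OF bphi] bfun_scale[OF hst(1)]] .
  have fz: "f z = 1" unfolding f_def using phiz hst(2) by (simp flip: of_real_add)
  have fn: "norm (f v) \<le> norm v" for v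
  proof -
    have "norm (f v) \<le> norm (of_real l * \<phi> v) + norm (of_real (1-l) * h v)"
      unfolding f_def by (rule norm_triangle_ineq)
    also have "\<dots> = l * norm (\<phi> v) + (1-l) * norm (h v)"
      by (simp only: norm_mult norm_of_real) (use l in simp)
    also have "\<dots> \<le> l * norm v + (1-l) * norm v"
      using l phin[of v] hst(3)[of v] by (intro add_mono mult_left_mono) auto
    finally show ?thesis by (simp add: algebra_simps)
  qed
  have stf: "(z, f) \<in> states sc" using st_intro[OF hst(4) bf fz fn] .
  let ?T2 = "\<lambda>x. sc (h x) y"
  have bT2: "bop sc ?T2" using bop_R[OF hst(1)] .
  have nT2: "numrad sc ?T2 = 1" using nr_eq[OF ne ni bT2] onorm_R[OF hst(1) y(1)] stD(3)[OF zh(1)] by simp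
  have fT2: "f (?T2 z) = f y" using bfun_sc[OF bf] hst(2) by simp
  have "norm (of_real (1-l) * h y) - norm (of_real l * \<phi> y) \<le> norm (f y)"
    unfolding f_def using norm_diff_ineq[of "of_real (1-l) * h y" "of_real l * \<phi> y"] by (metis add.commute)
  moreover have "norm (of_real (1-l) * h y) = (1-l) * norm (h y)" "norm (of_real l * \<phi> y) = l * norm (\<phi> y)"
    by (simp only: norm_mult norm_of_real, use l in simp)+
  ultimately have "(1-l) * norm (h y) - l * norm (\<phi> y) \<le> norm (f y)" by simp
  moreover have "(1-l) * (1-d) \<le> (1-l) * norm (h y)" using l zh(3) by (intro mult_left_mono) auto
  moreover have "l * norm (\<phi> y) \<le> l * (1/4)" using l phiy by (intro mult_left_mono) auto
  moreover have "1 - \<eta> < (1-l) * (1-d) - l * (1/4)"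
  proof -
    have "(1-l) * (1-d) - l * (1/4) = 1 - l - d + l*d - l/4" by (simp add: algebra_simps)
    also have "\<dots> \<ge> 1 - e/4 - e/4 - e/16"
    proof -
      have "0 \<le> l * d" using l d by simp
      then show ?thesis using l_def d_def by linarith
    qed
    finally show ?thesis using e by linarith
  qed
  ultimately have "norm (f y) > 1 - \<eta>" by linarith
  then have "norm (f (?T2 z)) > 1 - \<eta>" using fT2 by simp
  then obtain S2 where S2: "bop sc S2" "numrad sc S2 = 1" "norm (f (S2 z)) = 1" "onorm (\<lambda>x. S2 x - ?T2 x) < 1/4"
    using H[OF bT2 nT2 stf] by blast
  have oS2: "onorm S2 = 1" using nr_eq[OF ne ni S2(1)] S2(2) by simp
  have S2n: "norm (S2 z) \<le> 1" using onorm[OF bop_bl[OF S2(1)], of z] oS2 hst(4) by simp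
  have "1 \<le> norm (of_real l * \<phi> (S2 z) + of_real (1-l) * h (S2 z))" using S2(3) unfolding f_def by simp
  from mix[OF l _ _ this] have 1: "1 \<le> norm (\<phi> (S2 z))"
    using phin[of "S2 z"] hst(3)[of "S2 z"] S2n by simp
  have "\<phi> (S2 z) = \<phi> (S2 z - ?T2 z) + \<phi> (?T2 z)" using bfun_diff[OF bphi, of "S2 z" "?T2 z"] by (simp add: algebra_simps)
  moreover have "\<phi> (?T2 z) = \<phi> y" using bfun_sc[OF bphi] hst(2) by simp
  moreover have "norm (\<phi> (S2 z - ?T2 z)) < 1/4"
  proof -
    have "norm (\<phi> (S2 z - ?T2 z)) \<le> norm (S2 z - ?T2 z)" using phin .
    also have "\<dots> \<le> onorm (\<lambda>x. S2 x - ?T2 x) * norm z" using onorm_diff_bound[OF S2(1) bT2] .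
    finally show ?thesis using S2(4) hst(4) by simp
  qed
  ultimately have "norm (\<phi> (S2 z)) < 1/2" using phiy norm_triangle_ineq[of "\<phi> (S2 z - ?T2 z)" "\<phi> y"] by simp
  then show False using 1 by simp
qed

lemma od_val:
  assumes od: "one_dim sc" and T: "bop sc T"
  shows "\<exists>a. \<forall>x f. (x,f) \<in> states sc \<longrightarrow> f (T x) = a"
proof -
  obtain e where e: "\<And>x. \<exists>c. x = sc c e" using od unfolding one_dim_def by blast
  obtain a where a: "T e = sc a e" using e by blast
  have "f (T x) = a" if st: "(x,f) \<in> states sc" for x f
  proof -
    obtain c where c: "x = sc c e" using e by blast
    have "T x = sc c (sc a e)" unfolding c using bop_sc[OF T] a by simp
    also have "\<dots> = sc a (sc c e)" by (metis sc_mult mult.commute)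
    finally have "T x = sc a x" using c by simp
    then show ?thesis using bfun_sc[OF stD(2)[OF st]] stD(4)[OF st] by simp
  qed
  then show ?thesis by blast
qed

lemma od_nr:
  assumes od: "one_dim sc" and T: "bop sc T" and st: "(x,f) \<in> states sc"
  shows "norm (f (T x)) = numrad sc T"
proof -
  obtain a where a: "\<And>x f. (x,f) \<in> states sc \<Longrightarrow> f (T x) = a" using od_val[OF od T] by blast
  have "numrad sc T = (SUP p\<in>states sc. norm a)" unfolding numrad_def
    by (rule SUP_cong) (auto simp: a)
  also have "\<dots> = norm a" using st by (intro cSUP_const) auto
  finally show ?thesis using a[OF st] by simp
qed

lemma od_pp: "one_dim sc \<Longrightarrow> BPBpp_nu sc"
  unfolding BPBpp_nu_def
proof (intro allI impI exI[of _ 1] conjI)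
  fix \<epsilon> :: real and T x f assume od: "one_dim sc" and "\<epsilon> > 0"
    and h: "bop sc T \<and> numrad sc T = 1 \<and> (x, f) \<in> states sc \<and> 1 - 1 < norm (f (T x))"
  show "\<exists>S. bop sc S \<and> numrad sc S = 1 \<and> norm (f (S x)) = 1 \<and> onorm (\<lambda>z. S z - T z) < \<epsilon>"
    using h od_nr[OF od, of T x f] \<open>\<epsilon> > 0\<close> by (intro exI[of _ T]) (simp add: onorm_zero)
qed simp

lemma od_op: "one_dim sc \<Longrightarrow> BPBop_nu sc"
  unfolding BPBop_nu_def
proof (intro allI impI exI[of _ 1] conjI)
  fix \<epsilon> :: real and T x f assume od: "one_dim sc" and "\<epsilon> > 0"
    and h: "bop sc T \<and> numrad sc T = 1 \<and> (x, f) \<in> states sc \<and> 1 - 1 < norm (f (T x))"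
  show "\<exists>y g. (y, g) \<in> states sc \<and> norm (g (T y)) = 1 \<and> norm (y - x) < \<epsilon> \<and> onorm (\<lambda>z. g z - f z) < \<epsilon>"
    using h od_nr[OF od, of T x f] \<open>\<epsilon> > 0\<close> by (intro exI[of _ x] exI[of _ f]) (simp add: onorm_zero)
qed simp

theorem main:
  assumes "\<exists>x::'a. x \<noteq> 0" "numidx sc = 1"
  shows "(BPBpp_nu sc \<longleftrightarrow> BPBop_nu sc) \<and> (BPBop_nu sc \<longleftrightarrow> one_dim sc)"
  using pp_one[OF assms] op_one[OF assms] od_pp od_op by blast

end

lemma st_intro_gen:
  assumes "norm x = 1" "bfun sc f" "f x = 1" "\<And>v. norm (f v) \<le> norm v"
  shows "(x,f) \<in> states sc"
proof -
  have "onorm f \<le> 1" using assms(4) by (intro onorm_bound) auto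
  moreover have "norm (f x) / norm x \<le> onorm f" using le_onorm assms(2) unfolding bfun_def by blast
  ultimately have "onorm f = 1" using assms by simp
  then show ?thesis using assms unfolding states_def by auto
qed

lemma real_hb_abs:
  fixes f :: "'a::real_normed_vector \<Rightarrow> real"
  assumes add: "\<forall>x y. f (x+y) = f x + f y" and sc: "\<forall>r x. f (r *\<^sub>R x) = r * f x"
    and bd: "\<forall>x. f x \<le> norm x"
  shows "\<bar>f v\<bar> \<le> norm v" "bounded_linear f"
proof -
  have neg: "f (-w) = - f w" for w using sc[rule_format, of "-1" w] by simp
  show ab: "\<bar>f v\<bar> \<le> norm v" for v
  proof -
    have "f (-v) \<le> norm v" using bd[rule_format, of "-v"] by simp
    then show ?thesis using bd[rule_format, of v] neg[of v] by (simp add: abs_le_iff)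
  qed
  show "bounded_linear f"
  proof (rule bounded_linear_intro[where K=1])
    fix x y show "f (x + y) = f x + f y" using add by blast
  next
    fix r x show "f (r *\<^sub>R x) = r *\<^sub>R f x" using sc by simp
  next
    fix x show "norm (f x) \<le> norm x * 1" using ab[of x] by simp
  qed
qed

lemma gsc_real: "gsc (scaleR :: real \<Rightarrow> 'a::real_normed_vector \<Rightarrow> 'a)"
proof
  fix x :: 'a assume nx: "norm x = 1"
  obtain f :: "'a \<Rightarrow> real" where f: "\<forall>x y. f (x+y) = f x + f y" "\<forall>r x. f (r *\<^sub>R x) = r * f x"
    "f x = 1" "\<forall>x. f x \<le> norm x" using real_hb[OF nx] by blast
  have b: "bfun scaleR f" unfolding bfun_def using real_hb_abs[OF f(1,2,4)] f(2) by auto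
  have "(x, f) \<in> states scaleR"
    by (rule st_intro_gen[OF nx b f(3)]) (use real_hb_abs(1)[OF f(1,2,4)] in simp)
  then show "\<exists>f. (x, f) \<in> states scaleR" by blast
next
  show "\<And>r x. of_real r *\<^sub>R (x::'a) = r *\<^sub>R x" by simp
  show "\<And>a b x. (a * b) *\<^sub>R (x::'a) = a *\<^sub>R b *\<^sub>R x" by simp
  show "\<And>a b x. (a + b) *\<^sub>R (x::'a) = a *\<^sub>R x + b *\<^sub>R x" by (rule scaleR_add_left)
  show "\<And>a x y. a *\<^sub>R ((x::'a) + y) = a *\<^sub>R x + a *\<^sub>R y" by (rule scaleR_add_right)
  show "\<And>a x. norm (a *\<^sub>R (x::'a)) = norm a * norm x" by simp
qed

lemma gsc_cplx:
  fixes scC :: "complex \<Rightarrow> 'b::real_normed_vector \<Rightarrow> 'b"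
  assumes cns: "complex_normed_structure scC"
  shows "gsc scC"
proof -
  have of_r: "\<And>r x. scC (complex_of_real r) x = r *\<^sub>R x"
   and mu: "\<And>a b x. scC (a * b) x = scC a (scC b x)"
   and al: "\<And>a b x. scC (a + b) x = scC a x + scC b x"
   and ar: "\<And>a x y. scC a (x + y) = scC a x + scC a y"
   and no: "\<And>a x. norm (scC a x) = cmod a * norm x"
    using cns unfolding complex_normed_structure_def by blast+
  show ?thesis
  proof (unfold_locales)
    fix x0 :: 'b assume nx: "norm x0 = 1"
    obtain f :: "'b \<Rightarrow> real" where f: "\<forall>x y. f (x+y) = f x + f y" "\<forall>r x. f (r *\<^sub>R x) = r * f x"
      "f x0 = 1" "\<forall>x. f x \<le> norm x" using real_hb[OF nx] by blast
    note fa = real_hb_abs[OF f(1,2,4)]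
    define I where "I x = scC \<i> x" for x
    have II: "I (I x) = - x" for x
      unfolding I_def using mu[of \<i> \<i> x] of_r[of "-1" x] by simp
    have Iadd: "I (x + y) = I x + I y" for x y unfolding I_def by (rule ar)
    have Isc: "I (r *\<^sub>R x) = r *\<^sub>R I x" for r x
      unfolding I_def by (metis of_r mu mult.commute)
    have In: "norm (I x) = norm x" for x unfolding I_def using no by simp
    define F where "F x = complex_of_real (f x) - \<i> * complex_of_real (f (I x))" for x
    have Fadd: "F (x + y) = F x + F y" for x y
      unfolding F_def using f(1) Iadd by (simp add: algebra_simps)
    have Fsc: "F (r *\<^sub>R x) = r *\<^sub>R F x" for r x
      unfolding F_def using f(2) Isc by (simp add: algebra_simps scaleR_conv_of_real)
    have fneg: "f (- v) = - f v" for v using f(2)[rule_format, of "-1" v] by simp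
    have FI: "F (I x) = \<i> * F x" for x
      unfolding F_def using II fneg by (simp add: algebra_simps)
    have ReF: "Re (F x) = f x" for x unfolding F_def by simp
    have decomp: "scC c x = Re c *\<^sub>R x + Im c *\<^sub>R I x" for c x
    proof -
      have "c = complex_of_real (Re c) + \<i> * complex_of_real (Im c)" by (simp add: complex_eq_iff)
      then have "scC c x = scC (complex_of_real (Re c)) x + scC (\<i> * complex_of_real (Im c)) x"
        by (metis al)
      also have "\<dots> = Re c *\<^sub>R x + Im c *\<^sub>R I x"
        unfolding I_def by (metis of_r mu mult.commute)
      finally show ?thesis .
    qed
    have Fc: "F (scC c x) = c * F x" for c x
    proof -
      have "F (scC c x) = Re c *\<^sub>R F x + Im c *\<^sub>R (\<i> * F x)"
        unfolding decomp Fadd Fsc FI ..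
      also have "\<dots> = (complex_of_real (Re c) + \<i> * complex_of_real (Im c)) * F x"
        by (simp add: scaleR_conv_of_real algebra_simps)
      also have "complex_of_real (Re c) + \<i> * complex_of_real (Im c) = c" by (simp add: complex_eq_iff)
      finally show ?thesis .
    qed
    have Fn: "norm (F x) \<le> norm x" for x
    proof (cases "F x = 0")
      case True then show ?thesis by simp
    next
      case False
      define c where "c = cnj (F x) / complex_of_real (cmod (F x))"
      have cF: "c * F x = complex_of_real (cmod (F x))"
      proof -
        have "cnj (F x) * F x = complex_of_real (cmod (F x)) * complex_of_real (cmod (F x))"
          using complex_norm_square[of "F x"] by (simp add: mult.commute power2_eq_square)
        then show ?thesis unfolding c_def using False by simp
      qed
      have nc: "cmod c = 1" unfolding c_def using False by (simp add: norm_divide)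
      have "cmod (F x) = Re (F (scC c x))" using Fc cF by simp
      also have "\<dots> = f (scC c x)" by (rule ReF)
      also have "\<dots> \<le> norm (scC c x)" using f(4) by blast
      also have "\<dots> = norm x" using no nc by simp
      finally show ?thesis by simp
    qed
    have bl: "bounded_linear F"
    proof (rule bounded_linear_intro[where K=1])
      fix x show "norm (F x) \<le> norm x * 1" using Fn by simp
    qed (use Fadd Fsc in auto)
    have bF: "bfun scC F" unfolding bfun_def using bl Fc by blast
    have "F x0 = 1"
    proof -
      have r: "Re (F x0) = 1" using ReF f(3) by simp
      have "cmod (F x0) \<le> 1" using Fn nx by metis
      then have "(cmod (F x0))^2 \<le> 1" by (simp add: power_le_one)
      then have "(Re (F x0))^2 + (Im (F x0))^2 \<le> 1" by (simp add: cmod_power2)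
      then have "Im (F x0) = 0" using r by simp
      then show ?thesis using r by (simp add: complex_eq_iff)
    qed
    then show "\<exists>f. (x0, f) \<in> states scC" using st_intro_gen[OF nx bF] Fn by blast
  qed (rule of_r mu al ar no)+
qed

theorem proposition2p3:
  fixes scC :: "complex \<Rightarrow> 'b::banach \<Rightarrow> 'b"
  shows "((\<exists>x::'a::banach. x \<noteq> 0) \<and> numidx (scaleR :: real \<Rightarrow> 'a \<Rightarrow> 'a) = 1 \<longrightarrow>
           (BPBpp_nu (scaleR :: real \<Rightarrow> 'a \<Rightarrow> 'a) \<longleftrightarrow> BPBop_nu (scaleR :: real \<Rightarrow> 'a \<Rightarrow> 'a)) \<and>
           (BPBop_nu (scaleR :: real \<Rightarrow> 'a \<Rightarrow> 'a) \<longleftrightarrow> one_dim (scaleR :: real \<Rightarrow> 'a \<Rightarrow> 'a)))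
       \<and> (complex_normed_structure scC \<and> (\<exists>x::'b. x \<noteq> 0) \<and> numidx scC = 1 \<longrightarrow>
           (BPBpp_nu scC \<longleftrightarrow> BPBop_nu scC) \<and> (BPBop_nu scC \<longleftrightarrow> one_dim scC))"
proof (rule conjI; rule impI)
  assume "(\<exists>x::'a. x \<noteq> 0) \<and> numidx (scaleR :: real \<Rightarrow> 'a \<Rightarrow> 'a) = 1"
  then show "(BPBpp_nu (scaleR :: real \<Rightarrow> 'a \<Rightarrow> 'a) \<longleftrightarrow> BPBop_nu (scaleR :: real \<Rightarrow> 'a \<Rightarrow> 'a)) \<and>
           (BPBop_nu (scaleR :: real \<Rightarrow> 'a \<Rightarrow> 'a) \<longleftrightarrow> one_dim (scaleR :: real \<Rightarrow> 'a \<Rightarrow> 'a))"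
    using gsc.main[OF gsc_real] by (elim conjE)
next
  assume a: "complex_normed_structure scC \<and> (\<exists>x::'b. x \<noteq> 0) \<and> numidx scC = 1"
  then have g: "gsc scC" using gsc_cplx by (elim conjE)
  from a show "(BPBpp_nu scC \<longleftrightarrow> BPBop_nu scC) \<and> (BPBop_nu scC \<longleftrightarrow> one_dim scC)"
    using gsc.main[OF g] by (elim conjE)
qed

end
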